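(* For $0\le r_1,r_2\le n$ and $0\le s\le\min(r_1,n-r_1,r_2,n-r_2)$, $$\mathrm{tr}\big(\Lambda_s^{r_1,r_2}\circ(\Lambda_s^{r_1,r_2})^\star\big)=\frac{[r_1]_s\,[n-r_2]_s}{[n-r_1]_s\,[r_2]_s}\cdot\frac{\binom{n}{r_1}\binom{n}{r_2}}{\binom{n}{s}-\binom{n}{s-1}}.$$
   Context: Let $\Omega$ be a finite set with $|\Omega|=n\ge1$, $G=S(\Omega)$, $X=\mathcal P(\Omega)$, $X_r=\{x\in X:|x|=r\}$, $G$ acting on $L^2(X)$ (complex functions on $X$ with standard inner product; $L^2(X_r)$ = functions supported on $X_r$) by $(\rho(g)\psi)(x)=\psi(g^{-1}x)$. For $0\le s\le\min(r,n-r)$, $L^2(X_r)_s$ is the unique irreducible $G$-subspace of $L^2(X_r)$ isomorphic to the irreducible representation associated with the partition $(n-s,s)$. For $0\le s\le\min(r_1,n-r_1,r_2,n-r_2)$, $\Lambda_s^{r_1,r_2}$ is a $G$-equivariant map $L^2(X)\to L^2(X)$ sending $L^2(X_{r_1})_s$ into $L^2(X_{r_2})_s$ and vanishing on its orthogonal complement, with kernel $\lambda$ defined on integers $\max(0,r_2-r_1)\le k\le\min(n-r_1,r_2)$ by $(\Lambda_s^{r_1,r_2}\psi)(x_2)=\sum_{x_1\in X_{r_1}}\lambda(|x_2\setminus x_1|)\psi(x_1)$. The kernel agrees on its domain with a unique polynomial of degree $s$ which is nonzero at $0$; $\Lambda_s^{r_1,r_2}$ is normalized so that this polynomial takes the value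 $1$ at $t=0$. $\star$ is the Hilbert adjoint, $[\alpha]_k=\alpha(\alpha-1)\cdots(\alpha-k+1)$, $\binom{n}{-1}=0$. *)

theory Defs
  imports Complex_Main "HOL-Computational_Algebra.Polynomial"
begin

text \<open>Omega is the finite type 'a, n = CARD('a); X = Pow Omega = UNIV :: 'a set set.
  L2(X) is the space of all functions 'a set => complex.\<close>

definition l2_inner :: "('a::finite set \<Rightarrow> complex) \<Rightarrow> ('a set \<Rightarrow> complex) \<Rightarrow> complex" where
  "l2_inner f g = (\<Sum>x\<in>UNIV. f x * cnj (g x))"

definition delta :: "'a set \<Rightarrow> 'a set \<Rightarrow> complex" where
  "delta x = (\<lambda>y. if y = x then 1 else 0)"

definition op_trace :: "(('a::finite set \<Rightarrow> complex) \<Rightarrow> ('a set \<Rightarrow> complex)) \<Rightarrow> complex" where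
  "op_trace T = (\<Sum>x\<in>UNIV. T (delta x) x)"

text \<open>Hilbert adjoint of a linear operator on L2(X) (conjugate transpose of its matrix
  in the orthonormal basis of deltas).\<close>
definition hadjoint :: "(('a::finite set \<Rightarrow> complex) \<Rightarrow> ('a set \<Rightarrow> complex))
    \<Rightarrow> ('a set \<Rightarrow> complex) \<Rightarrow> ('a set \<Rightarrow> complex)" where
  "hadjoint T = (\<lambda>\<psi> x. \<Sum>y\<in>UNIV. cnj (T (delta x) y) * \<psi> y)"

definition rho :: "('a \<Rightarrow> 'a) \<Rightarrow> ('a set \<Rightarrow> complex) \<Rightarrow> ('a set \<Rightarrow> complex)" where
  "rho g \<psi> = (\<lambda>x. \<psi> (inv g ` x))"

definition equivariant :: "(('a set \<Rightarrow> complex) \<Rightarrow> ('a set \<Rightarrow> complex)) \<Rightarrow> bool" where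
  "equivariant T \<longleftrightarrow> (\<forall>g \<psi>. bij g \<longrightarrow> T (rho g \<psi>) = rho g (T \<psi>))"

definition chi :: "nat \<Rightarrow> 'a set \<Rightarrow> 'a set \<Rightarrow> complex" where
  "chi r y = (\<lambda>x. if card x = r \<and> y \<subseteq> x then 1 else 0)"

text \<open>L2(X_r)_s, the (n-s,s)-isotypic (irreducible) subspace of L2(X_r), realised concretely as
  the functions on X_r lying in the span of the chi r y with |y| = s and orthogonal to
  all chi r z with |z| = s - 1.\<close>
definition L2_comp :: "nat \<Rightarrow> nat \<Rightarrow> ('a::finite set \<Rightarrow> complex) set" where
  "L2_comp r s = {\<psi>. (\<exists>c. \<psi> = (\<lambda>x. \<Sum>y\<in>{y. card y = s}. c y * chi r y x))
                     \<and> (\<forall>z. card z + 1 = s \<longrightarrow> l2_inner \<psi> (chi r z) = 0)}"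

definition is_Lambda :: "nat \<Rightarrow> nat \<Rightarrow> nat
    \<Rightarrow> (('a::finite set \<Rightarrow> complex) \<Rightarrow> ('a set \<Rightarrow> complex)) \<Rightarrow> bool" where
  "is_Lambda r1 r2 s L \<longleftrightarrow>
     equivariant L \<and>
     (\<forall>\<psi>. L \<psi> \<in> L2_comp r2 s) \<and>
     (\<forall>\<psi>. (\<forall>\<phi>\<in>L2_comp r1 s. l2_inner \<psi> \<phi> = 0) \<longrightarrow> L \<psi> = (\<lambda>_. 0)) \<and>
     (\<exists>p :: complex poly. degree p = s \<and> poly p 0 = 1 \<and>
        (\<forall>\<psi> x2. L \<psi> x2 =
           (if card x2 = r2
            then (\<Sum>x1\<in>{x1. card x1 = r1}. poly p (of_nat (card (x2 - x1))) * \<psi> x1)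
            else 0)))"

definition ffall :: "real \<Rightarrow> nat \<Rightarrow> real" where
  "ffall \<alpha> k = (\<Prod>i<k. \<alpha> - real i)"

end

theory Submission
  imports Defs
begin

lemma ffnat: "(\<Prod>i<j. (of_nat k - of_nat i) :: 'b::field_char_0) = fact j * of_nat (k choose j)"
proof -
  have "(of_nat (k choose j) :: 'b) = (\<Prod>i=0..<j. of_nat k - of_nat i) / fact j"
    by (simp add: binomial_gbinomial gbinomial_prod_rev)
  thus ?thesis by (simp add: atLeast0LessThan field_simps)
qed

lemma alt_pascal:
  fixes f :: "nat \<Rightarrow> 'b::comm_ring_1"
  shows "(\<Sum>j\<le>Suc s. (-1)^j * of_nat (Suc s choose j) * f j)
       = (\<Sum>j\<le>s. (-1)^j * of_nat (s choose j) * (f j - f (Suc j)))"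
proof -
  have a: "(\<Sum>j\<le>Suc s. (-1)^j * of_nat (Suc s choose j) * f j)
     = f 0 + (\<Sum>j\<le>s. (-1)^(Suc j) * of_nat (s choose j) * f (Suc j))
           + (\<Sum>j\<le>s. (-1)^(Suc j) * of_nat (s choose Suc j) * f (Suc j))"
    by (subst sum.atMost_Suc_shift) (simp add: algebra_simps sum_subtractf sum_negf sum.distrib)
  have b: "(\<Sum>j\<le>s. (-1)^j * of_nat (s choose j) * f j)
     = (\<Sum>j\<le>Suc s. (-1)^j * of_nat (s choose j) * f j)" by (simp add: binomial_eq_0)
  also have "\<dots> = f 0 + (\<Sum>j\<le>s. (-1)^(Suc j) * of_nat (s choose Suc j) * f (Suc j))"
    by (subst sum.atMost_Suc_shift) simp
  finally have b: "(\<Sum>j\<le>s. (-1)^j * of_nat (s choose j) * f j) = \<dots>" .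
  have c: "(\<Sum>j\<le>s. (-1)^j * of_nat (s choose j) * (f j - f (Suc j)))
     = (\<Sum>j\<le>s. (-1)^j * of_nat (s choose j) * f j) - (\<Sum>j\<le>s. (-1)^j * of_nat (s choose j) * f (Suc j))"
    by (simp add: algebra_simps sum_subtractf)
  have d: "(\<Sum>j\<le>s. (-1)^(Suc j) * of_nat (s choose j) * f (Suc j)) = - (\<Sum>j\<le>s. (-1)^j * of_nat (s choose j) * f (Suc j))"
    by (simp add: sum_negf[symmetric])
  show ?thesis unfolding a c b d by simp
qed

lemma diff_shift_coeff:
  fixes P :: "real poly"
  shows "\<forall>i\<ge>degree P. coeff (P - pcompose P [:1,1:]) i = 0"
proof (cases "degree P = 0")
  case True
  then obtain c where "P = [:c:]" by (metis degree_eq_zeroE)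
  thus ?thesis by simp
next
  case False
  have dg: "degree (pcompose P [:1,1:]) = degree P" by (simp add: degree_pcompose)
  have lc: "lead_coeff (pcompose P [:1,1:]) = lead_coeff P"
    by (subst lead_coeff_comp) auto
  show ?thesis
  proof (intro allI impI)
    fix i assume "degree P \<le> i"
    show "coeff (P - pcompose P [:1,1:]) i = 0"
    proof (cases "i = degree P")
      case True thus ?thesis using lc dg by simp
    next
      case False
      hence "i > degree P" using \<open>degree P \<le> i\<close> by simp
      thus ?thesis using dg by (simp add: coeff_eq_0)
    qed
  qed
qed

lemma alt_poly:
  fixes P :: "real poly"
  assumes "\<forall>i\<ge>s. coeff P i = 0"
  shows "(\<Sum>j\<le>s. (-1)^j * of_nat (s choose j) * poly P (real j)) = 0"
  using assms
proof (induction s arbitrary: P)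
  case 0
  hence "P = 0" by (simp add: poly_eq_iff)
  thus ?case by simp
next
  case (Suc s)
  define P' where "P' = P - pcompose P [:1,1:]"
  have dP: "degree P \<le> Suc s" using Suc.prems by (intro degree_le) auto
  have "\<forall>i\<ge>s. coeff P' i = 0"
  proof (cases "degree P \<le> s")
    case True thus ?thesis using diff_shift_coeff[of P] unfolding P'_def by auto
  next
    case False
    hence "degree P = Suc s" using dP by simp
    have "coeff P (Suc s) = 0" using Suc.prems by simp
    hence "P = 0" using \<open>degree P = Suc s\<close> by (metis leading_coeff_0_iff)
    thus ?thesis using \<open>degree P = Suc s\<close> by simp
  qed
  note ih = Suc.IH[OF this]
  have "(\<Sum>j\<le>Suc s. (-1)^j * of_nat (Suc s choose j) * poly P (real j))
     = (\<Sum>j\<le>s. (-1)^j * of_nat (s choose j) * (poly P (real j) - poly P (real (Suc j))))"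
    by (rule alt_pascal)
  also have "\<dots> = (\<Sum>j\<le>s. (-1)^j * of_nat (s choose j) * poly P' (real j))"
    by (simp add: P'_def poly_pcompose algebra_simps)
  finally show ?case using ih by simp
qed

lemma alt_inv:
  fixes A :: real
  assumes "\<forall>i\<le>s. A \<noteq> real i"
  shows "(\<Sum>j\<le>s. (-1)^j * of_nat (s choose j) / (A - real j))
       = (-1)^s * fact s / (\<Prod>i\<le>s. (A - real i))"
  using assms
proof (induction s arbitrary: A)
  case 0
  thus ?case by simp
next
  case (Suc s)
  have nz: "\<forall>i\<le>Suc s. A - real i \<noteq> 0" using Suc.prems by auto
  have h1: "\<forall>i\<le>s. A \<noteq> real i" using Suc.prems by auto
  have h2: "\<forall>i\<le>s. A - 1 \<noteq> real i"
  proof (intro allI impI)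
    fix i assume "i \<le> s"
    hence "A \<noteq> real (Suc i)" using Suc.prems by auto
    thus "A - 1 \<noteq> real i" by simp
  qed
  have "(\<Sum>j\<le>Suc s. (-1)^j * of_nat (Suc s choose j) / (A - real j))
      = (\<Sum>j\<le>Suc s. (-1)^j * of_nat (Suc s choose j) * (1 / (A - real j)))" by simp
  also have "\<dots> = (\<Sum>j\<le>s. (-1)^j * of_nat (s choose j) * (1 / (A - real j) - 1 / (A - real (Suc j))))"
    by (rule alt_pascal)
  also have "\<dots> = (\<Sum>j\<le>s. (-1)^j * of_nat (s choose j) / (A - real j))
                 - (\<Sum>j\<le>s. (-1)^j * of_nat (s choose j) / ((A - 1) - real j))"
    unfolding sum_subtractf[symmetric]
  proof (rule sum.cong)
    fix j assume "j \<in> {..s}"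
    have "A - real (Suc j) = (A - 1) - real j" by simp
    thus "(-1)^j * of_nat (s choose j) * (1 / (A - real j) - 1 / (A - real (Suc j)))
        = (-1)^j * of_nat (s choose j) / (A - real j) - (-1)^j * of_nat (s choose j) / ((A - 1) - real j)"
      by (simp add: right_diff_distrib)
  qed simp
  also have "\<dots> = (-1)^s * fact s / (\<Prod>i\<le>s. (A - real i)) - (-1)^s * fact s / (\<Prod>i\<le>s. ((A - 1) - real i))"
    using Suc.IH[OF h1] Suc.IH[OF h2] by simp
  also have "\<dots> = (-1)^(Suc s) * fact (Suc s) / (\<Prod>i\<le>Suc s. (A - real i))"
  proof -
    have p1: "(\<Prod>i\<le>Suc s. (A - real i)) = (\<Prod>i\<le>s. (A - real i)) * (A - real (Suc s))"
      by simp
    have p2: "(\<Prod>i\<le>Suc s. (A - real i)) = A * (\<Prod>i\<le>s. ((A - 1) - real i))"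
      by (subst prod.atMost_Suc_shift) (simp add: algebra_simps)
    have n1: "(\<Prod>i\<le>s. (A - real i)) \<noteq> 0" using nz by auto
    have n2: "(\<Prod>i\<le>s. ((A - 1) - real i)) \<noteq> 0" using h2 by auto
    have n3: "A - real (Suc s) \<noteq> 0" "A \<noteq> 0" using nz by (auto dest: spec[of _ 0])
    define P where "P = (\<Prod>i\<le>Suc s. (A - real i))"
    have e1: "1 / (\<Prod>i\<le>s. (A - real i)) = (A - real (Suc s)) / P"
      unfolding P_def p1 using n3(1) nonzero_mult_divide_mult_cancel_right[OF n3(1), of 1] by simp
    have e2: "1 / (\<Prod>i\<le>s. ((A - 1) - real i)) = A / P"
      unfolding P_def p2 using n3(2) nonzero_mult_divide_mult_cancel_left[OF n3(2), of 1] by simp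
    have "(-1)^s * fact s / (\<Prod>i\<le>s. (A - real i)) - (-1)^s * fact s / (\<Prod>i\<le>s. ((A - 1) - real i))
        = (-1)^s * fact s * (1 / (\<Prod>i\<le>s. (A - real i)) - 1 / (\<Prod>i\<le>s. ((A - 1) - real i)))"
      by (simp add: algebra_simps)
    also have "\<dots> = (-1)^s * fact s * (- real (Suc s) / P)"
      unfolding e1 e2 by (simp add: diff_divide_distrib[symmetric])
    also have "\<dots> = (-1)^(Suc s) * fact (Suc s) / P" by (simp add: algebra_simps)
    finally show ?thesis unfolding P_def .
  qed
  finally show ?case .
qed

definition ffp :: "nat \<Rightarrow> complex poly" where "ffp j = (\<Prod>i<j. [:- of_nat i, 1:])"
definition rfp :: "'b::idom \<Rightarrow> nat \<Rightarrow> 'b poly" where "rfp a e = (\<Prod>i<e. [:a - of_nat i, -1:])"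

lemma poly_ffp: "poly (ffp j) x = (\<Prod>i<j. x - of_nat i)"
  by (simp add: ffp_def poly_prod)

lemma poly_rfp: "poly (rfp a e) x = (\<Prod>i<e. a - of_nat i - x)"
  by (simp add: rfp_def poly_prod)

lemma degree_ffp: "degree (ffp j) = j"
  unfolding ffp_def by (subst degree_prod_eq_sum_degree) auto

lemma coeff_ffp: "coeff (ffp j) j = 1"
proof -
  have "coeff (ffp j) j = lead_coeff (ffp j)" by (simp add: degree_ffp)
  also have "\<dots> = 1" unfolding ffp_def lead_coeff_prod by simp
  finally show ?thesis .
qed

lemma degree_rfp: "degree (rfp a e) = e"
  unfolding rfp_def by (subst degree_prod_eq_sum_degree) auto

lemma coeff_rfp: "coeff (rfp a e) e = (-1)^e"
proof -
  have "coeff (rfp a e) e = lead_coeff (rfp a e)" by (simp add: degree_rfp)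
  also have "\<dots> = (-1)^e" unfolding rfp_def lead_coeff_prod by simp
  finally show ?thesis .
qed

lemma span_rfp:
  fixes D :: "'b::idom poly"
  assumes "\<forall>i\<ge>s. coeff D i = 0"
  shows "\<exists>\<alpha>. D = (\<Sum>e<s. smult (\<alpha> e) (rfp a e))"
  using assms
proof (induction s arbitrary: D)
  case 0
  hence "D = 0" by (simp add: poly_eq_iff)
  thus ?case by simp
next
  case (Suc s)
  define c where "c = coeff D s * (-1)^s"
  define D' where "D' = D - smult c (rfp a s)"
  have "\<forall>i\<ge>s. coeff D' i = 0"
  proof (intro allI impI)
    fix i assume "s \<le> i"
    show "coeff D' i = 0"
    proof (cases "i = s")
      case True
      have "((-1)::'b)^s * (-1)^s = 1" by (simp flip: power_mult_distrib)
      thus ?thesis using True by (simp add: D'_def c_def coeff_rfp mult.assoc)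
    next
      case False
      hence "i > s" using \<open>s \<le> i\<close> by simp
      hence "coeff (rfp a s) i = 0" by (simp add: coeff_eq_0 degree_rfp)
      thus ?thesis using Suc.prems \<open>i > s\<close> by (simp add: D'_def)
    qed
  qed
  from Suc.IH[OF this] obtain \<alpha> where a: "D' = (\<Sum>e<s. smult (\<alpha> e) (rfp a e))" by blast
  define \<beta> where "\<beta> = \<alpha>(s := c)"
  have "(\<Sum>e<Suc s. smult (\<beta> e) (rfp a e)) = (\<Sum>e<s. smult (\<alpha> e) (rfp a e)) + smult c (rfp a s)"
    by (simp add: \<beta>_def)
  also have "\<dots> = D" using a unfolding D'_def by (metis diff_add_cancel)
  finally show ?case by metis
qed

lemma count_super:
  fixes X w :: "'b set"
  assumes X: "finite X" and wX: "w \<subseteq> X" and m: "card w \<le> m"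
  shows "card {z. w \<subseteq> z \<and> z \<subseteq> X \<and> card z = m} = (card X - card w) choose (m - card w)"
proof -
  have fw: "finite w" using X wX finite_subset by blast
  have eq: "{z. w \<subseteq> z \<and> z \<subseteq> X \<and> card z = m} = (\<lambda>B. B \<union> w) ` {B. B \<subseteq> X - w \<and> card B = m - card w}"
  proof (intro equalityI subsetI)
    fix z assume "z \<in> {z. w \<subseteq> z \<and> z \<subseteq> X \<and> card z = m}"
    hence z: "w \<subseteq> z" "z \<subseteq> X" "card z = m" by auto
    have fz: "finite z" using z X finite_subset by blast
    have "card (z - w) = m - card w" using z fz by (simp add: card_Diff_subset fw)
    moreover have "z = (z - w) \<union> w" using z by blast
    moreover have "z - w \<subseteq> X - w" using z by blast
    ultimately show "z \<in> (\<lambda>B. B \<union> w) ` {B. B \<subseteq> X - w \<and> card B = m - card w}" by blast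
  next
    fix z assume "z \<in> (\<lambda>B. B \<union> w) ` {B. B \<subseteq> X - w \<and> card B = m - card w}"
    then obtain B where B: "B \<subseteq> X - w" "card B = m - card w" "z = B \<union> w" by blast
    have fB: "finite B" using B(1) X by (meson finite_Diff finite_subset)
    have "card z = card B + card w" unfolding B(3) by (rule card_Un_disjoint) (use B fB fw in auto)
    also have "\<dots> = m" using B m by simp
    finally show "z \<in> {z. w \<subseteq> z \<and> z \<subseteq> X \<and> card z = m}" using B wX by blast
  qed
  have inj: "inj_on (\<lambda>B. B \<union> w) {B. B \<subseteq> X - w \<and> card B = m - card w}"
  proof (rule inj_onI)
    fix B B' assume "B \<in> {B. B \<subseteq> X - w \<and> card B = m - card w}" "B' \<in> {B. B \<subseteq> X - w \<and> card B = m - card w}"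
      "B \<union> w = B' \<union> w"
    thus "B = B'" by blast
  qed
  have "card {z. w \<subseteq> z \<and> z \<subseteq> X \<and> card z = m} = card {B. B \<subseteq> X - w \<and> card B = m - card w}"
    unfolding eq by (rule card_image[OF inj])
  also have "\<dots> = card (X - w) choose (m - card w)" using X by (simp add: n_subsets)
  also have "card (X - w) = card X - card w" using wX fw by (simp add: card_Diff_subset)
  finally show ?thesis .
qed

lemma count_super_empty:
  fixes X w :: "'b set"
  assumes X: "finite X" and m: "card w > m"
  shows "{z. w \<subseteq> z \<and> z \<subseteq> X \<and> card z = m} = {}"
proof -
  { fix z assume z: "w \<subseteq> z" "z \<subseteq> X" "card z = m"
    have "finite z" using z X finite_subset by blast
    hence "card w \<le> card z" using z card_mono by blast
    hence False using z m by simp }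
  thus ?thesis by blast
qed

lemma count_split:
  fixes S T :: "'b set"
  assumes S: "finite S"
  shows "card {w. w \<subseteq> S \<and> card (w - T) = j \<and> card (w \<inter> T) = e}
         = (card (S - T) choose j) * (card (S \<inter> T) choose e)"
proof -
  define P where "P = {a. a \<subseteq> S - T \<and> card a = j} \<times> {b. b \<subseteq> S \<inter> T \<and> card b = e}"
  have eq: "{w. w \<subseteq> S \<and> card (w - T) = j \<and> card (w \<inter> T) = e} = (\<lambda>(a,b). a \<union> b) ` P"
  proof (intro equalityI subsetI)
    fix w assume w: "w \<in> {w. w \<subseteq> S \<and> card (w - T) = j \<and> card (w \<inter> T) = e}"
    hence "(w - T, w \<inter> T) \<in> P" unfolding P_def by auto
    moreover have "w = (\<lambda>(a,b). a \<union> b) (w - T, w \<inter> T)" by auto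
    ultimately show "w \<in> (\<lambda>(a,b). a \<union> b) ` P" by blast
  next
    fix w assume "w \<in> (\<lambda>(a,b). a \<union> b) ` P"
    then obtain a b where ab: "(a,b) \<in> P" "w = a \<union> b" by auto
    hence "w - T = a" "w \<inter> T = b" "w \<subseteq> S" unfolding P_def by auto
    thus "w \<in> {w. w \<subseteq> S \<and> card (w - T) = j \<and> card (w \<inter> T) = e}" using ab unfolding P_def by auto
  qed
  have inj: "inj_on (\<lambda>(a,b). a \<union> b) P"
  proof (rule inj_onI)
    fix x y assume "x \<in> P" "y \<in> P" "(\<lambda>(a,b). a \<union> b) x = (\<lambda>(a,b). a \<union> b) y"
    thus "x = y" unfolding P_def by (cases x; cases y) auto
  qed
  have "card {w. w \<subseteq> S \<and> card (w - T) = j \<and> card (w \<inter> T) = e} = card P"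
    unfolding eq by (rule card_image[OF inj])
  also have "\<dots> = (card (S - T) choose j) * (card (S \<inter> T) choose e)"
  proof -
    have f1: "finite (S - T)" "finite (S \<inter> T)" using S by auto
    show ?thesis unfolding P_def card_cartesian_product n_subsets[OF f1(1)] n_subsets[OF f1(2)] ..
  qed
  finally show ?thesis .
qed

lemma double_count:
  fixes f :: "'c \<Rightarrow> 'd::comm_semiring_1"
  assumes "finite A" "finite B"
  shows "(\<Sum>b\<in>B. \<Sum>a\<in>{a\<in>A. R b a}. f a) = (\<Sum>a\<in>A. f a * of_nat (card {b\<in>B. R b a}))"
proof -
  have "(\<Sum>b\<in>B. \<Sum>a\<in>{a\<in>A. R b a}. f a) = (\<Sum>b\<in>B. \<Sum>a\<in>A. if R b a then f a else 0)"
    using assms by (simp add: sum.inter_filter)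
  also have "\<dots> = (\<Sum>a\<in>A. \<Sum>b\<in>B. if R b a then f a else 0)" by (rule sum.swap)
  also have "\<dots> = (\<Sum>a\<in>A. f a * of_nat (card {b\<in>B. R b a}))"
  proof (rule sum.cong)
    fix a assume "a \<in> A"
    have "(\<Sum>b\<in>B. if R b a then f a else 0) = (\<Sum>b\<in>{b\<in>B. R b a}. f a)"
      by (rule sum.inter_filter[OF assms(2), symmetric])
    also have "\<dots> = f a * of_nat (card {b\<in>B. R b a})" by (simp add: mult.commute)
    finally show "(\<Sum>b\<in>B. if R b a then f a else 0) = f a * of_nat (card {b\<in>B. R b a})" .
  qed simp
  finally show ?thesis .
qed

lemma card_split_Int:
  fixes w T :: "'b set"
  assumes "finite w"
  shows "card w = card (w - T) + card (w \<inter> T)"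
proof -
  have "w = (w - T) \<union> (w \<inter> T)" by blast
  hence "card w = card ((w - T) \<union> (w \<inter> T))" by simp
  also have "\<dots> = card (w - T) + card (w \<inter> T)" by (rule card_Un_disjoint) (use assms in auto)
  finally show ?thesis .
qed

lemma mom_nat:
  fixes x1 :: "'a::finite set"
  assumes x1: "card x1 = r1"
  shows "(\<Sum>x2\<in>{x. card x = r2}. (card (x2 - x1) choose j) * (card (x2 \<inter> x1) choose e))
       = ((card (UNIV :: 'a set) - r1) choose j) * (r1 choose e)
          * (if j + e \<le> r2 then (card (UNIV :: 'a set) - (j+e)) choose (r2 - (j+e)) else 0)"
proof -
  define W where "W = {w::'a set. card (w - x1) = j \<and> card (w \<inter> x1) = e}"
  define X where "X = {x::'a set. card x = r2}"
  define v where "v = (if j + e \<le> r2 then (card (UNIV :: 'a set) - (j+e)) choose (r2 - (j+e)) else 0)"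
  have t: "(card (x2 - x1) choose j) * (card (x2 \<inter> x1) choose e) = card {w\<in>W. w \<subseteq> x2}" for x2
  proof -
    have "{w\<in>W. w \<subseteq> x2} = {w. w \<subseteq> x2 \<and> card (w - x1) = j \<and> card (w \<inter> x1) = e}"
      unfolding W_def by blast
    thus ?thesis using count_split[of x2 x1 j e] by simp
  qed
  have "(\<Sum>x2\<in>X. (card (x2 - x1) choose j) * (card (x2 \<inter> x1) choose e))
      = (\<Sum>x2\<in>X. 1 * of_nat (card {w\<in>W. w \<subseteq> x2}))" by (simp add: t)
  also have "\<dots> = (\<Sum>w\<in>W. \<Sum>x2\<in>{x2\<in>X. w \<subseteq> x2}. 1)"
    by (rule double_count[symmetric]) auto
  also have "\<dots> = (\<Sum>w\<in>W. v)"
  proof (rule sum.cong)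
    fix w assume "w \<in> W"
    hence cw: "card w = j + e" unfolding W_def using card_split_Int[of w x1] by simp
    have eqs: "{x2\<in>X. w \<subseteq> x2} = {z. w \<subseteq> z \<and> z \<subseteq> UNIV \<and> card z = r2}" unfolding X_def by blast
    show "(\<Sum>x2\<in>{x2\<in>X. w \<subseteq> x2}. 1) = v"
    proof (cases "j + e \<le> r2")
      case True
      thus ?thesis unfolding eqs v_def using count_super[of UNIV w r2] cw by simp
    next
      case False
      thus ?thesis unfolding eqs v_def using count_super_empty[of UNIV r2 w] cw by simp
    qed
  qed simp
  also have "\<dots> = card W * v" by simp
  also have "card W = ((card (UNIV :: 'a set) - r1) choose j) * (r1 choose e)"
  proof -
    have "W = {w. w \<subseteq> UNIV \<and> card (w - x1) = j \<and> card (w \<inter> x1) = e}" unfolding W_def by blast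
    hence "card W = (card (UNIV - x1) choose j) * (card (UNIV \<inter> x1) choose e)"
      using count_split[of UNIV x1 j e] by simp
    also have "card (UNIV - x1) = card (UNIV :: 'a set) - r1" using x1 by (simp add: card_Diff_subset)
    finally show ?thesis using x1 by simp
  qed
  finally show ?thesis unfolding X_def v_def by simp
qed

lemma mom:
  fixes x1 :: "'a::finite set"
  assumes x1: "card x1 = r1"
  shows "(\<Sum>x2\<in>{x. card x = r2}. poly (ffp j) (of_nat (card (x2 - x1)))
            * poly (rfp (of_nat r2) e) (of_nat (card (x2 - x1))))
       = of_nat (fact j * fact e * (((card (UNIV :: 'a set) - r1) choose j) * (r1 choose e)
          * (if j + e \<le> r2 then (card (UNIV :: 'a set) - (j+e)) choose (r2 - (j+e)) else 0)))"
proof -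
  have t: "poly (ffp j) (of_nat (card (x2 - x1))) * poly (rfp (of_nat r2) e) (of_nat (card (x2 - x1)))
      = of_nat (fact j * fact e) * of_nat ((card (x2 - x1) choose j) * (card (x2 \<inter> x1) choose e))"
    if "x2 \<in> {x. card x = r2}" for x2
  proof -
    have c2: "card x2 = card (x2 - x1) + card (x2 \<inter> x1)" using card_split_Int[of x2 x1] by simp
    have c: "card x2 = r2" using that by simp
    have "poly (rfp (of_nat r2) e) (of_nat (card (x2 - x1)) :: complex)
        = (\<Prod>i<e. of_nat (card (x2 \<inter> x1)) - of_nat i)"
      unfolding poly_rfp
    proof (rule prod.cong)
      fix i assume "i \<in> {..<e}"
      have "(of_nat r2 :: complex) = of_nat (card (x2 - x1)) + of_nat (card (x2 \<inter> x1))"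
        using c c2 by (metis of_nat_add)
      thus "(of_nat r2 :: complex) - of_nat i - of_nat (card (x2 - x1)) = of_nat (card (x2 \<inter> x1)) - of_nat i"
        by simp
    qed simp
    thus ?thesis unfolding poly_ffp ffnat by simp
  qed
  have "(\<Sum>x2\<in>{x. card x = r2}. poly (ffp j) (of_nat (card (x2 - x1)))
            * poly (rfp (of_nat r2) e) (of_nat (card (x2 - x1))))
      = (\<Sum>x2\<in>{x. card x = r2}. of_nat (fact j * fact e) * of_nat ((card (x2 - x1) choose j) * (card (x2 \<inter> x1) choose e)))"
    by (rule sum.cong) (simp_all add: t)
  also have "\<dots> = of_nat (fact j * fact e) * of_nat (\<Sum>x2\<in>{x. card x = r2}. (card (x2 - x1) choose j) * (card (x2 \<inter> x1) choose e))"
    by (simp add: sum_distrib_left)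
  also have "\<dots> = of_nat (fact j * fact e * (((card (UNIV :: 'a set) - r1) choose j) * (r1 choose e)
          * (if j + e \<le> r2 then (card (UNIV :: 'a set) - (j+e)) choose (r2 - (j+e)) else 0)))"
    unfolding mom_nat[OF x1] by simp
  finally show ?thesis .
qed

lemma l2_inner_chi:
  fixes f :: "'a::finite set \<Rightarrow> complex"
  shows "l2_inner f (chi r z) = (\<Sum>x\<in>{x. card x = r \<and> z \<subseteq> x}. f x)"
proof -
  have "l2_inner f (chi r z) = (\<Sum>x\<in>UNIV. if card x = r \<and> z \<subseteq> x then f x else 0)"
    unfolding l2_inner_def chi_def by (rule sum.cong) auto
  also have "\<dots> = (\<Sum>x\<in>{x. card x = r \<and> z \<subseteq> x}. f x)"
    using sum.inter_filter[of UNIV f "\<lambda>x. card x = r \<and> z \<subseteq> x"] by simp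
  finally show ?thesis .
qed

lemma zero_sum:
  fixes L :: "('a::finite set \<Rightarrow> complex) \<Rightarrow> ('a set \<Rightarrow> complex)"
  assumes comp: "\<forall>\<psi>. L \<psi> \<in> L2_comp r2 s" and sr2: "s \<le> r2"
    and z: "card z < s"
  shows "(\<Sum>x\<in>{x. card x = r2 \<and> z \<subseteq> x}. L \<psi> x) = 0"
proof -
  define f where "f = L \<psi>"
  define X where "X = {x::'a set. card x = r2}"
  define Z where "Z = {z'::'a set. z \<subseteq> z' \<and> card z' = s - 1}"
  have o: "(\<Sum>x\<in>{x. card x = r2 \<and> z' \<subseteq> x}. f x) = 0" if "z' \<in> Z" for z'
  proof -
    have "card z' + 1 = s" using that z unfolding Z_def by simp
    hence "l2_inner f (chi r2 z') = 0" using comp unfolding f_def L2_comp_def by blast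
    thus ?thesis unfolding l2_inner_chi .
  qed
  have "0 = (\<Sum>z'\<in>Z. \<Sum>x\<in>{x\<in>X. z' \<subseteq> x}. f x)"
  proof -
    have "(\<Sum>z'\<in>Z. \<Sum>x\<in>{x\<in>X. z' \<subseteq> x}. f x) = (\<Sum>z'\<in>Z. 0)"
    proof (rule sum.cong)
      fix z' assume "z' \<in> Z"
      have "{x\<in>X. z' \<subseteq> x} = {x. card x = r2 \<and> z' \<subseteq> x}" unfolding X_def by blast
      thus "(\<Sum>x\<in>{x\<in>X. z' \<subseteq> x}. f x) = 0" using o[OF \<open>z' \<in> Z\<close>] by simp
    qed simp
    thus ?thesis by simp
  qed
  also have "\<dots> = (\<Sum>x\<in>X. f x * of_nat (card {z'\<in>Z. z' \<subseteq> x}))"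
    by (rule double_count) auto
  also have "\<dots> = (\<Sum>x\<in>X. if z \<subseteq> x then f x * of_nat ((r2 - card z) choose (s - 1 - card z)) else 0)"
  proof (rule sum.cong)
    fix x assume "x \<in> X"
    have eq: "{z'\<in>Z. z' \<subseteq> x} = {z'. z \<subseteq> z' \<and> z' \<subseteq> x \<and> card z' = s - 1}" unfolding Z_def by blast
    show "f x * of_nat (card {z'\<in>Z. z' \<subseteq> x})
        = (if z \<subseteq> x then f x * of_nat ((r2 - card z) choose (s - 1 - card z)) else 0)"
    proof (cases "z \<subseteq> x")
      case True
      thus ?thesis unfolding eq using count_super[of x z "s - 1"] z \<open>x \<in> X\<close> unfolding X_def by simp
    next
      case False
      hence "{z'. z \<subseteq> z' \<and> z' \<subseteq> x \<and> card z' = s - 1} = {}" by blast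
      thus ?thesis unfolding eq using False by simp
    qed
  qed simp
  also have "\<dots> = of_nat ((r2 - card z) choose (s - 1 - card z)) * (\<Sum>x\<in>{x\<in>X. z \<subseteq> x}. f x)"
  proof -
    define K where "K = (of_nat ((r2 - card z) choose (s - 1 - card z)) :: complex)"
    have "(\<Sum>x\<in>X. if z \<subseteq> x then f x * K else 0) = (\<Sum>x\<in>X. (if z \<subseteq> x then f x else 0) * K)"
      by (rule sum.cong) auto
    also have "\<dots> = (\<Sum>x\<in>X. if z \<subseteq> x then f x else 0) * K" by (rule sum_distrib_right[symmetric])
    also have "(\<Sum>x\<in>X. if z \<subseteq> x then f x else 0) = (\<Sum>x\<in>{x\<in>X. z \<subseteq> x}. f x)"
      by (rule sum.inter_filter[symmetric]) simp
    finally show ?thesis unfolding K_def by (simp add: mult.commute)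
  qed
  finally have "of_nat ((r2 - card z) choose (s - 1 - card z)) * (\<Sum>x\<in>{x\<in>X. z \<subseteq> x}. f x) = 0" by simp
  moreover have "(r2 - card z) choose (s - 1 - card z) \<noteq> 0" using z sr2 by simp
  ultimately have "(\<Sum>x\<in>{x\<in>X. z \<subseteq> x}. f x) = 0" by simp
  moreover have "{x\<in>X. z \<subseteq> x} = {x. card x = r2 \<and> z \<subseteq> x}" unfolding X_def by blast
  ultimately show ?thesis unfolding f_def by simp
qed

lemma L_delta:
  fixes L :: "('a::finite set \<Rightarrow> complex) \<Rightarrow> ('a set \<Rightarrow> complex)"
  assumes kern: "\<forall>\<psi> x2. L \<psi> x2 = (if card x2 = r2
            then (\<Sum>x1\<in>{x1. card x1 = r1}. poly p (of_nat (card (x2 - x1))) * \<psi> x1) else 0)"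
  shows "L (delta x1) x2 = (if card x2 = r2 \<and> card x1 = r1 then poly p (of_nat (card (x2 - x1))) else 0)"
proof -
  have "(\<Sum>x\<in>{x1. card x1 = r1}. poly p (of_nat (card (x2 - x))) * delta x1 x)
      = (\<Sum>x\<in>{x1. card x1 = r1}. if x = x1 then poly p (of_nat (card (x2 - x))) else 0)"
    unfolding delta_def by (rule sum.cong) auto
  also have "\<dots> = (if card x1 = r1 then poly p (of_nat (card (x2 - x1))) else 0)"
    by (subst sum.delta) auto
  finally show ?thesis using kern by simp
qed

lemma orth_p:
  fixes L :: "('a::finite set \<Rightarrow> complex) \<Rightarrow> ('a set \<Rightarrow> complex)" and x1 :: "'a set"
  assumes kern: "\<forall>\<psi> x2. L \<psi> x2 = (if card x2 = r2
            then (\<Sum>x1\<in>{x1. card x1 = r1}. poly p (of_nat (card (x2 - x1))) * \<psi> x1) else 0)"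
    and comp: "\<forall>\<psi>. L \<psi> \<in> L2_comp r2 s" and sr2: "s \<le> r2"
    and x1: "card x1 = r1" and e: "e < s"
  shows "(\<Sum>x2\<in>{x. card x = r2}. poly p (of_nat (card (x2 - x1)))
            * poly (rfp (of_nat r2) e) (of_nat (card (x2 - x1)))) = 0"
proof -
  define X where "X = {x::'a set. card x = r2}"
  define Z where "Z = {z::'a set. z \<subseteq> x1 \<and> card z = e}"
  define f where "f = L (delta x1)"
  have fx: "f x2 = poly p (of_nat (card (x2 - x1)))" if "x2 \<in> X" for x2
    using L_delta[OF kern, of x1 x2] that x1 unfolding f_def X_def by simp
  have rf: "poly (rfp (of_nat r2) e) (of_nat (card (x2 - x1)) :: complex)
        = fact e * of_nat (card {z\<in>Z. z \<subseteq> x2})" if "x2 \<in> X" for x2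
  proof -
    have c2: "card x2 = card (x2 - x1) + card (x2 \<inter> x1)" using card_split_Int[of x2 x1] by simp
    have c: "card x2 = r2" using that unfolding X_def by simp
    have "poly (rfp (of_nat r2) e) (of_nat (card (x2 - x1)) :: complex)
        = (\<Prod>i<e. of_nat (card (x2 \<inter> x1)) - of_nat i)"
      unfolding poly_rfp
    proof (rule prod.cong)
      fix i assume "i \<in> {..<e}"
      have "(of_nat r2 :: complex) = of_nat (card (x2 - x1)) + of_nat (card (x2 \<inter> x1))"
        using c c2 by (metis of_nat_add)
      thus "(of_nat r2 :: complex) - of_nat i - of_nat (card (x2 - x1)) = of_nat (card (x2 \<inter> x1)) - of_nat i"
        by simp
    qed simp
    also have "\<dots> = fact e * of_nat (card (x2 \<inter> x1) choose e)" by (rule ffnat)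
    also have "card (x2 \<inter> x1) choose e = card {z\<in>Z. z \<subseteq> x2}"
    proof -
      have "{z\<in>Z. z \<subseteq> x2} = {z. z \<subseteq> x2 \<inter> x1 \<and> card z = e}" unfolding Z_def by blast
      thus ?thesis using n_subsets[of "x2 \<inter> x1" e] by simp
    qed
    finally show ?thesis .
  qed
  have "(\<Sum>x2\<in>X. poly p (of_nat (card (x2 - x1))) * poly (rfp (of_nat r2) e) (of_nat (card (x2 - x1))))
      = fact e * (\<Sum>x2\<in>X. f x2 * of_nat (card {z\<in>Z. z \<subseteq> x2}))"
    by (simp add: sum_distrib_left fx rf algebra_simps)
  also have "(\<Sum>x2\<in>X. f x2 * of_nat (card {z\<in>Z. z \<subseteq> x2})) = (\<Sum>z\<in>Z. \<Sum>x2\<in>{x2\<in>X. z \<subseteq> x2}. f x2)"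
    by (rule double_count[symmetric]) auto
  also have "\<dots> = (\<Sum>z\<in>Z. 0)"
  proof (rule sum.cong)
    fix z assume "z \<in> Z"
    hence "card z < s" using e unfolding Z_def by simp
    moreover have "{x2\<in>X. z \<subseteq> x2} = {x. card x = r2 \<and> z \<subseteq> x}" unfolding X_def by blast
    ultimately show "(\<Sum>x2\<in>{x2\<in>X. z \<subseteq> x2}. f x2) = 0"
      using zero_sum[OF comp sr2] unfolding f_def by simp
  qed simp
  finally show ?thesis unfolding X_def by simp
qed

lemma ffall_nat: "b \<le> a \<Longrightarrow> ffall (real a) b = fact a / fact (a - b)"
  unfolding ffall_def by (simp add: ffnat fact_binomial)

lemma ffall_zero: "a < b \<Longrightarrow> ffall (real a) b = 0"
  unfolding ffall_def by (rule prod_zero) auto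

lemma ffall_pos: "b \<le> a \<Longrightarrow> ffall (real a) b > 0"
  by (simp add: ffall_nat)

lemma fac_id1:
  assumes "j \<le> s" "e < s" "s \<le> r2" "s \<le> n - r2" "r2 \<le> n" "j + e \<le> r2"
  shows "ffall (real (n-s+1)) j * real ((n-(j+e)) choose (r2-(j+e))) / ffall (real r2) j
       = ffall (real (r2-j)) e * ffall (real (n-(j+e))) (s-1-e) * (fact (n-s+1) / (fact (n-r2) * fact r2))"
proof -
  have e1: "n - s + 1 - j = n - (j+e) - (s-1-e)" using assms by simp
  have e2: "n - (j+e) - (r2 - (j+e)) = n - r2" using assms by simp
  have e3: "r2 - j - e = r2 - (j+e)" by simp
  have A0: "ffall (real (n-s+1)) j = fact (n-s+1) / fact (n-s+1-j)"
    using assms by (intro ffall_nat) simp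
  have A: "ffall (real (n-s+1)) j = fact (n-s+1) / fact (n-(j+e) - (s-1-e))"
    unfolding A0 e1 ..
  have B: "real ((n-(j+e)) choose (r2-(j+e))) = fact (n-(j+e)) / (fact (r2-(j+e)) * fact (n - r2))"
    using assms by (subst binomial_fact) (simp_all add: e2)
  have C: "ffall (real r2) j = fact r2 / fact (r2 - j)" using assms by (simp add: ffall_nat)
  have D: "ffall (real (r2-j)) e = fact (r2-j) / fact (r2 - (j+e))" using assms by (subst ffall_nat) (simp_all add: e3)
  have E: "ffall (real (n-(j+e))) (s-1-e) = fact (n-(j+e)) / fact (n-(j+e) - (s-1-e))"
    using assms by (subst ffall_nat) simp_all
  show ?thesis unfolding A B C D E by (simp add: field_simps)
qed

lemma fac_id2:
  assumes "j \<le> s" "s \<le> r2" "s \<le> n - r2" "r2 \<le> n" "j + s \<le> r2"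
  shows "ffall (real (n-s+1)) j * real ((n-(j+s)) choose (r2-(j+s))) / ffall (real r2) j
       = ffall (real (r2-j)) s * (fact (n-s+1) / (fact (n-r2) * fact r2)) / (real (n-s+1) - real j)"
proof -
  have e1: "n - s + 1 - j = Suc (n - (j+s))" using assms by simp
  have e2: "n - (j+s) - (r2 - (j+s)) = n - r2" using assms by simp
  have e3: "r2 - j - s = r2 - (j+s)" by simp
  have e4: "real (n-s+1) - real j = real (Suc (n - (j+s)))" using assms by (simp add: of_nat_diff)
  have A0: "ffall (real (n-s+1)) j = fact (n-s+1) / fact (n-s+1-j)"
    using assms by (intro ffall_nat) simp
  have A1: "(fact (n-s+1-j) :: real) = real (Suc (n - (j+s))) * fact (n-(j+s))"
    unfolding e1 fact_Suc ..
  have A: "ffall (real (n-s+1)) j = fact (n-s+1) / (real (Suc (n - (j+s))) * fact (n-(j+s)))"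
    unfolding A0 A1 ..
  have B: "real ((n-(j+s)) choose (r2-(j+s))) = fact (n-(j+s)) / (fact (r2-(j+s)) * fact (n - r2))"
    using assms by (subst binomial_fact) (simp_all add: e2)
  have C: "ffall (real r2) j = fact r2 / fact (r2 - j)" using assms by (simp add: ffall_nat)
  have D: "ffall (real (r2-j)) s = fact (r2-j) / fact (r2 - (j+s))" using assms by (subst ffall_nat) (simp_all add: e3)
  show ?thesis unfolding A B C D e4 by (simp add: field_simps del: of_nat_Suc)
qed

definition cc :: "nat \<Rightarrow> nat \<Rightarrow> nat \<Rightarrow> nat \<Rightarrow> nat \<Rightarrow> real" where
  "cc n r1 r2 s j = (-1)^j * real (s choose j) * ffall (real (n-s+1)) j
      / (ffall (real (n - r1)) j * ffall (real r2) j)"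

definition MM :: "nat \<Rightarrow> nat \<Rightarrow> nat \<Rightarrow> nat \<Rightarrow> nat \<Rightarrow> real" where
  "MM n r1 r2 j e = fact j * fact e * real (((n - r1) choose j) * (r1 choose e)
      * (if j + e \<le> r2 then (n - (j+e)) choose (r2 - (j+e)) else 0))"

lemma cc_MM:
  assumes "j \<le> s" "s \<le> n - r1" "r1 \<le> n"
  shows "cc n r1 r2 s j * MM n r1 r2 j e = (-1)^j * real (s choose j) * (fact e * real (r1 choose e))
     * (ffall (real (n-s+1)) j * real (if j + e \<le> r2 then (n - (j+e)) choose (r2 - (j+e)) else 0)
        / ffall (real r2) j)"
proof -
  have f1: "ffall (real (n - r1)) j = fact (n-r1) / fact (n-r1-j)"
    using assms by (intro ffall_nat) simp
  have f2: "fact j * real ((n - r1) choose j) = fact (n-r1) / fact (n-r1-j)"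
    using assms by (intro fact_binomial) simp
  have "fact j * real ((n - r1) choose j) = ffall (real (n - r1)) j" unfolding f1 f2 ..
  moreover have "ffall (real (n - r1)) j \<noteq> 0" using assms ffall_pos[of j "n - r1"] by simp
  ultimately show ?thesis unfolding cc_def MM_def of_nat_mult
    by (simp add: field_simps flip: \<open>fact j * real ((n - r1) choose j) = ffall (real (n - r1)) j\<close>)
qed

lemma R1:
  assumes "r1 \<le> n" "r2 \<le> n" "s \<le> r1" "s \<le> n - r1" "s \<le> r2" "s \<le> n - r2" "e < s"
  shows "(\<Sum>j\<le>s. cc n r1 r2 s j * MM n r1 r2 j e) = 0"
proof -
  define K where "K = fact e * real (r1 choose e) * (fact (n-s+1) / (fact (n-r2) * fact r2))"
  define Q where "Q = rfp (real r2) e * rfp (real n - real e) (s-1-e)"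
  have t: "cc n r1 r2 s j * MM n r1 r2 j e = K * ((-1)^j * real (s choose j) * poly Q (real j))"
    if j: "j \<le> s" for j
  proof -
    have pq: "poly Q (real j) = ffall (real (r2-j)) e * ffall (real (n-(j+e))) (s-1-e)"
    proof -
      have "poly (rfp (real r2) e) (real j) = ffall (real (r2-j)) e"
        unfolding poly_rfp ffall_def using j assms by (intro prod.cong) (auto simp: of_nat_diff)
      moreover have "poly (rfp (real n - real e) (s-1-e)) (real j) = ffall (real (n-(j+e))) (s-1-e)"
        unfolding poly_rfp ffall_def using j assms by (intro prod.cong) (auto simp: of_nat_diff)
      ultimately show ?thesis unfolding Q_def by simp
    qed
    show ?thesis
    proof (cases "j + e \<le> r2")
      case True
      show ?thesis unfolding cc_MM[OF j assms(4,1)] pq K_def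
        using fac_id1[of j s e r2 n] True j assms by (simp add: algebra_simps)
    next
      case False
      hence "ffall (real (r2-j)) e = 0" using j assms by (intro ffall_zero) simp
      thus ?thesis unfolding cc_MM[OF j assms(4,1)] pq K_def using False by simp
    qed
  qed
  have "(\<Sum>j\<le>s. cc n r1 r2 s j * MM n r1 r2 j e) = K * (\<Sum>j\<le>s. (-1)^j * real (s choose j) * poly Q (real j))"
    by (simp add: t sum_distrib_left)
  also have "(\<Sum>j\<le>s. (-1)^j * real (s choose j) * poly Q (real j)) = 0"
  proof (rule alt_poly, intro allI impI)
    fix i assume "s \<le> i"
    have "degree Q \<le> e + (s-1-e)" unfolding Q_def
      by (rule order.trans[OF degree_mult_le]) (simp add: degree_rfp)
    hence "degree Q < i" using \<open>s \<le> i\<close> assms by simp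
    thus "coeff Q i = 0" by (simp add: coeff_eq_0)
  qed
  finally show ?thesis by simp
qed

lemma reflect_prod:
  assumes "s \<le> n - r2" "r2 \<le> n"
  shows "(-1)^s * (\<Prod>i<s. real r2 - real i - real (n-s+1)) = ffall (real (n - r2)) s"
proof -
  have "(-1)^s * (\<Prod>i<s. real r2 - real i - real (n-s+1)) = (\<Prod>i<s. real (n-s+1) + real i - real r2)"
    using prod_uminus[of "\<lambda>i. real (n-s+1) + real i - real r2" "{..<s}"] by (simp add: algebra_simps)
  also have "\<dots> = (\<Prod>i=0..<s. real (n-s+1) + real i - real r2)" by (simp add: atLeast0LessThan)
  also have "\<dots> = (\<Prod>i=0..<s. real (n-s+1) + real (s + 0 - Suc i) - real r2)"
    by (rule prod.atLeastLessThan_rev)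
  also have "\<dots> = (\<Prod>i=0..<s. real (n - r2) - real i)"
    using assms by (intro prod.cong) (auto simp: of_nat_diff)
  also have "\<dots> = ffall (real (n - r2)) s" by (simp add: ffall_def atLeast0LessThan)
  finally show ?thesis .
qed

lemma R2:
  assumes "r1 \<le> n" "r2 \<le> n" "s \<le> r1" "s \<le> n - r1" "s \<le> r2" "s \<le> n - r2"
  shows "(\<Sum>j\<le>s. cc n r1 r2 s j * MM n r1 r2 j s)
    = fact s * real (r1 choose s) * (fact (n-s+1) / (fact (n-r2) * fact r2))
      * (ffall (real (n - r2)) s * fact s / (\<Prod>i\<le>s. real (n-s+1) - real i))"
proof -
  define K where "K = fact s * real (r1 choose s) * (fact (n-s+1) / (fact (n-r2) * fact r2))"
  define F where "F = rfp (real r2) s"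
  define A where "A = real (n-s+1)"
  have Aj: "A - real j \<noteq> 0" if "j \<le> s" for j using that assms unfolding A_def by simp
  have pF: "poly F (real j) = ffall (real (r2-j)) s" if j: "j \<le> s" for j
    unfolding F_def poly_rfp ffall_def using j assms by (intro prod.cong) (auto simp: of_nat_diff)
  have t: "cc n r1 r2 s j * MM n r1 r2 j s = K * ((-1)^j * real (s choose j) * poly F (real j) / (A - real j))"
    if j: "j \<le> s" for j
  proof (cases "j + s \<le> r2")
    case True
    have X: "ffall (real (n-s+1)) j * real (if j + s \<le> r2 then (n - (j+s)) choose (r2 - (j+s)) else 0)
        / ffall (real r2) j = ffall (real (r2-j)) s * (fact (n-s+1) / (fact (n-r2) * fact r2)) / (real (n-s+1) - real j)"
      using fac_id2[of j s r2 n] True j assms by simp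
    show ?thesis unfolding cc_MM[OF j assms(4,1)] X pF[OF j] K_def A_def
      by (simp add: mult_ac times_divide_eq_right times_divide_eq_left)
  next
    case False
    hence "ffall (real (r2-j)) s = 0" using j assms by (intro ffall_zero) simp
    thus ?thesis unfolding cc_MM[OF j assms(4,1)] pF[OF j] K_def using False by simp
  qed
  have "poly (F - [:poly F A:]) A = 0" by simp
  then obtain G where G: "F - [:poly F A:] = [:-A, 1:] * G" unfolding poly_eq_0_iff_dvd by (auto elim: dvdE)
  have cG: "\<forall>i\<ge>s. coeff G i = 0"
  proof (cases "G = 0")
    case True thus ?thesis by simp
  next
    case False
    have "degree (F - [:poly F A:]) \<le> s"
      by (rule degree_diff_le) (simp_all add: F_def degree_rfp)
    moreover have "degree ([:-A, 1:] * G) = Suc (degree G)" using False by (subst degree_mult_eq) auto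
    ultimately have "degree G < s" using G by simp
    thus ?thesis by (auto intro: coeff_eq_0)
  qed
  have sp: "poly F (real j) / (A - real j) = poly F A / (A - real j) - poly G (real j)" if "j \<le> s" for j
  proof -
    have "poly F (real j) - poly F A = (real j - A) * poly G (real j)"
      using arg_cong[OF G, of "\<lambda>q. poly q (real j)"] by (simp add: algebra_simps)
    thus ?thesis using Aj[OF that] by (simp add: field_simps)
  qed
  have "(\<Sum>j\<le>s. cc n r1 r2 s j * MM n r1 r2 j s)
      = K * (\<Sum>j\<le>s. (-1)^j * real (s choose j) * (poly F (real j) / (A - real j)))"
    by (simp add: t sum_distrib_left)
  also have "(\<Sum>j\<le>s. (-1)^j * real (s choose j) * (poly F (real j) / (A - real j)))
      = poly F A * (\<Sum>j\<le>s. (-1)^j * real (s choose j) / (A - real j))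
        - (\<Sum>j\<le>s. (-1)^j * real (s choose j) * poly G (real j))"
    by (simp add: sp sum_distrib_left sum_subtractf algebra_simps)
  also have "(\<Sum>j\<le>s. (-1)^j * real (s choose j) * poly G (real j)) = 0" by (rule alt_poly[OF cG])
  also have "(\<Sum>j\<le>s. (-1)^j * real (s choose j) / (A - real j)) = (-1)^s * fact s / (\<Prod>i\<le>s. A - real i)"
    by (rule alt_inv) (use assms in \<open>auto simp: A_def\<close>)
  also have "poly F A * ((-1)^s * fact s / (\<Prod>i\<le>s. A - real i))
      = ((-1)^s * poly F A) * fact s / (\<Prod>i\<le>s. A - real i)" by simp
  also have "(-1)^s * poly F A = ffall (real (n - r2)) s"
    unfolding F_def poly_rfp A_def by (rule reflect_prod) (use assms in auto)
  finally show ?thesis unfolding K_def A_def by simp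
qed

definition HH :: "nat \<Rightarrow> nat \<Rightarrow> nat \<Rightarrow> nat \<Rightarrow> complex poly" where
  "HH n r1 r2 s = (\<Sum>j\<le>s. smult (complex_of_real (cc n r1 r2 s j)) (ffp j))"

lemma poly_HH: "poly (HH n r1 r2 s) x = (\<Sum>j\<le>s. complex_of_real (cc n r1 r2 s j) * poly (ffp j) x)"
  by (simp add: HH_def poly_sum)

lemma HH_0: "poly (HH n r1 r2 s) 0 = 1"
proof -
  have "poly (HH n r1 r2 s) 0 = (\<Sum>j\<le>s. if j = 0 then 1 else 0)"
    unfolding poly_HH
  proof (rule sum.cong)
    fix j assume "j \<in> {..s}"
    show "complex_of_real (cc n r1 r2 s j) * poly (ffp j) 0 = (if j = 0 then 1 else 0)"
    proof (cases "j = 0")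
      case True thus ?thesis by (simp add: cc_def ffall_def ffp_def)
    next
      case False
      hence "poly (ffp j) 0 = 0" unfolding poly_ffp by (intro prod_zero) (auto intro!: bexI[of _ 0])
      thus ?thesis using False by simp
    qed
  qed simp
  also have "\<dots> = 1" by simp
  finally show ?thesis .
qed

lemma coeff_ffp_gt: "i > j \<Longrightarrow> coeff (ffp j) i = 0"
  by (simp add: coeff_eq_0 degree_ffp)

lemma coeff_HH_gt: "i > s \<Longrightarrow> coeff (HH n r1 r2 s) i = 0"
  by (simp add: HH_def coeff_sum coeff_ffp_gt)

lemma coeff_HH_s: "coeff (HH n r1 r2 s) s = complex_of_real (cc n r1 r2 s s)"
proof -
  have "coeff (HH n r1 r2 s) s = (\<Sum>j\<le>s. if j = s then complex_of_real (cc n r1 r2 s j) else 0)"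
    unfolding HH_def coeff_sum
  proof (rule sum.cong)
    fix j assume "j \<in> {..s}"
    thus "coeff (smult (complex_of_real (cc n r1 r2 s j)) (ffp j)) s = (if j = s then complex_of_real (cc n r1 r2 s j) else 0)"
      by (cases "j = s") (auto simp: coeff_ffp coeff_ffp_gt)
  qed simp
  also have "\<dots> = complex_of_real (cc n r1 r2 s s)" by simp
  finally show ?thesis .
qed

lemma cc_s_nz:
  assumes "r1 \<le> n" "s \<le> r2" "s \<le> n - r1" "s \<le> n - r2"
  shows "cc n r1 r2 s s \<noteq> 0"
proof -
  have "s \<le> n - s + 1" using assms by arith
  thus ?thesis using assms ffall_pos[of s "n-s+1"] ffall_pos[of s "n-r1"] ffall_pos[of s r2]
  unfolding cc_def by simp
qed

lemma HH_real: "cnj (poly (HH n r1 r2 s) (of_nat k)) = poly (HH n r1 r2 s) (of_nat k)"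
  unfolding poly_HH poly_ffp by simp

lemma orth_HH:
  fixes x1 :: "'a::finite set"
  defines "n \<equiv> card (UNIV :: 'a set)"
  assumes x1: "card x1 = r1"
    and "r1 \<le> n" "r2 \<le> n" "s \<le> r1" "s \<le> n - r1" "s \<le> r2" "s \<le> n - r2" "e \<le> s"
  shows "(\<Sum>x2\<in>{x. card x = r2}. poly (HH n r1 r2 s) (of_nat (card (x2 - x1)))
            * poly (rfp (of_nat r2) e) (of_nat (card (x2 - x1))))
       = complex_of_real (\<Sum>j\<le>s. cc n r1 r2 s j * MM n r1 r2 j e)"
proof -
  have "(\<Sum>x2\<in>{x. card x = r2}. poly (HH n r1 r2 s) (of_nat (card (x2 - x1)))
            * poly (rfp (of_nat r2) e) (of_nat (card (x2 - x1))))
      = (\<Sum>j\<le>s. complex_of_real (cc n r1 r2 s j) * (\<Sum>x2\<in>{x. card x = r2}. poly (ffp j) (of_nat (card (x2 - x1)))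
            * poly (rfp (of_nat r2) e) (of_nat (card (x2 - x1)))))"
    unfolding poly_HH by (simp add: sum_distrib_left sum_distrib_right mult_ac sum.swap[of _ "{..s}"])
  also have "\<dots> = (\<Sum>j\<le>s. complex_of_real (cc n r1 r2 s j) * complex_of_real (MM n r1 r2 j e))"
    unfolding mom[OF x1] n_def MM_def by simp
  also have "\<dots> = complex_of_real (\<Sum>j\<le>s. cc n r1 r2 s j * MM n r1 r2 j e)" by simp
  finally show ?thesis .
qed

lemma orth_span:
  fixes Q D :: "complex poly" and kk :: "'b \<Rightarrow> complex"
  assumes o: "\<forall>e<s. (\<Sum>x\<in>X. poly Q (kk x) * poly (rfp a e) (kk x)) = 0"
    and c: "\<forall>i\<ge>s. coeff D i = 0"
  shows "(\<Sum>x\<in>X. poly Q (kk x) * poly D (kk x)) = 0"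
proof -
  obtain \<alpha> where D: "D = (\<Sum>e<s. smult (\<alpha> e) (rfp a e))" using span_rfp[OF c] by blast
  have "(\<Sum>x\<in>X. poly Q (kk x) * poly D (kk x))
      = (\<Sum>e<s. \<alpha> e * (\<Sum>x\<in>X. poly Q (kk x) * poly (rfp a e) (kk x)))"
    unfolding D poly_sum by (simp add: sum_distrib_left sum_distrib_right mult_ac sum.swap[of _ "{..<s}"])
  also have "\<dots> = 0" using o by simp
  finally show ?thesis .
qed

lemma row_norm:
  fixes L :: "('a::finite set \<Rightarrow> complex) \<Rightarrow> ('a set \<Rightarrow> complex)" and x1 :: "'a set"
  defines "n \<equiv> card (UNIV :: 'a set)"
  assumes kern: "\<forall>\<psi> x2. L \<psi> x2 = (if card x2 = r2
            then (\<Sum>x1\<in>{x1. card x1 = r1}. poly p (of_nat (card (x2 - x1))) * \<psi> x1) else 0)"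
    and comp: "\<forall>\<psi>. L \<psi> \<in> L2_comp r2 s"
    and deg: "degree p = s" and p0: "poly p 0 = 1"
    and x1: "card x1 = r1"
    and b: "r1 \<le> n" "r2 \<le> n" "s \<le> r1" "s \<le> n - r1" "s \<le> r2" "s \<le> n - r2"
  shows "(\<Sum>x2\<in>{x. card x = r2}. poly p (of_nat (card (x2 - x1))) * cnj (poly p (of_nat (card (x2 - x1)))))
     = complex_of_real (cc n r1 r2 s s * (-1)^s * (\<Sum>j\<le>s. cc n r1 r2 s j * MM n r1 r2 j s))"
proof -
  define X where "X = {x::'a set. card x = r2}"
  define kk where "kk = (\<lambda>x2. (of_nat (card (x2 - x1)) :: complex))"
  define H where "H = HH n r1 r2 s"
  define a where "a = (of_nat r2 :: complex)"
  have oP: "\<forall>e<s. (\<Sum>x\<in>X. poly p (kk x) * poly (rfp a e) (kk x)) = 0"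
    using orth_p[OF kern comp b(5) x1] unfolding X_def kk_def a_def by blast
  have oH: "\<forall>e<s. (\<Sum>x\<in>X. poly H (kk x) * poly (rfp a e) (kk x)) = 0"
  proof (intro allI impI)
    fix e assume "e < s"
    show "(\<Sum>x\<in>X. poly H (kk x) * poly (rfp a e) (kk x)) = 0"
      using orth_HH[OF x1, of r2 s e] R1[OF b \<open>e < s\<close>] b \<open>e < s\<close>
      unfolding X_def kk_def a_def H_def n_def by simp
  qed
  define Q where "Q = p - H"
  have oQ: "\<forall>e<s. (\<Sum>x\<in>X. poly Q (kk x) * poly (rfp a e) (kk x)) = 0"
    using oP oH unfolding Q_def by (simp add: algebra_simps sum_subtractf)
  define \<mu> where "\<mu> = coeff Q s / coeff H s"
  have cHs: "coeff H s \<noteq> 0" unfolding H_def coeff_HH_s using cc_s_nz[of r1 n s r2] b by simp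
  define D where "D = Q - smult \<mu> H"
  have cD: "\<forall>i\<ge>s. coeff D i = 0"
  proof (intro allI impI)
    fix i assume "s \<le> i"
    show "coeff D i = 0"
    proof (cases "i = s")
      case True thus ?thesis using cHs unfolding D_def \<mu>_def by simp
    next
      case False
      hence "i > s" using \<open>s \<le> i\<close> by simp
      thus ?thesis unfolding D_def Q_def H_def using deg coeff_HH_gt[of s i n r1 r2]
        by (simp add: coeff_eq_0)
    qed
  qed
  have oD: "\<forall>e<s. (\<Sum>x\<in>X. poly D (kk x) * poly (rfp a e) (kk x)) = 0"
  proof (intro allI impI)
    fix e assume "e < s"
    have "(\<Sum>x\<in>X. poly D (kk x) * poly (rfp a e) (kk x))
        = (\<Sum>x\<in>X. poly Q (kk x) * poly (rfp a e) (kk x)) - \<mu> * (\<Sum>x\<in>X. poly H (kk x) * poly (rfp a e) (kk x))"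
      unfolding D_def by (simp add: algebra_simps sum_subtractf sum_distrib_left)
    thus "(\<Sum>x\<in>X. poly D (kk x) * poly (rfp a e) (kk x)) = 0" using oQ oH \<open>e < s\<close> by simp
  qed
  have cD': "\<forall>i\<ge>s. coeff (map_poly cnj D) i = 0" using cD by (simp add: coeff_map_poly)
  have "(\<Sum>x\<in>X. poly D (kk x) * poly (map_poly cnj D) (kk x)) = 0" by (rule orth_span[OF oD cD'])
  moreover have "poly (map_poly cnj D) (kk x) = cnj (poly D (kk x))" for x
    using poly_cnj[of D "kk x"] unfolding kk_def by simp
  ultimately have "(\<Sum>x\<in>X. poly D (kk x) * cnj (poly D (kk x))) = 0" by simp
  hence "(\<Sum>x\<in>X. complex_of_real ((norm (poly D (kk x)))\<^sup>2)) = 0"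
    by (simp only: complex_norm_square)
  hence "complex_of_real (\<Sum>x\<in>X. (norm (poly D (kk x)))\<^sup>2) = 0" by simp
  hence "(\<Sum>x\<in>X. (norm (poly D (kk x)))\<^sup>2) = 0" by (simp only: of_real_eq_0_iff)
  hence Dz: "\<forall>x\<in>X. poly D (kk x) = 0"
    by (subst (asm) sum_nonneg_eq_0_iff) auto
  define k0 where "k0 = r2 - min r1 r2"
  have pts: "poly D (of_nat k) = 0" if k: "k \<in> {k0..k0+s}" for k
  proof -
    have k1: "k \<le> n - r1" "r2 - k \<le> r1" "k \<le> r2" using k b unfolding k0_def by auto
    have "k \<le> card (UNIV - x1)" using k1 x1 unfolding n_def by (simp add: card_Diff_subset)
    then obtain A where A: "A \<subseteq> UNIV - x1" "card A = k" by (meson obtain_subset_with_card_n)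
    have "r2 - k \<le> card x1" using k1 x1 by simp
    then obtain B where B: "B \<subseteq> x1" "card B = r2 - k" by (meson obtain_subset_with_card_n)
    have "card (A \<union> B) = card A + card B" by (rule card_Un_disjoint) (use A B in auto)
    hence "A \<union> B \<in> X" using A B k1 unfolding X_def by simp
    moreover have "(A \<union> B) - x1 = A" using A B by blast
    ultimately show ?thesis using Dz A unfolding kk_def by force
  qed
  have "D = 0"
  proof (rule poly_eqI_degree_lead_coeff[of D s 0 "of_nat ` {k0..k0+s}"])
    show "coeff D s = coeff 0 s" using cD by simp
    have "card (of_nat ` {k0..k0+s} :: complex set) = card {k0..k0+s}"
      by (rule card_image) (simp add: inj_on_def)
    thus "s \<le> card (of_nat ` {k0..k0+s} :: complex set)" by simp
    show "degree D \<le> s" using cD by (intro degree_le) auto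
    show "degree (0::complex poly) \<le> s" by simp
    show "\<And>z. z \<in> of_nat ` {k0..k0+s} \<Longrightarrow> poly D z = poly 0 z" using pts by auto
  qed
  hence "Q = smult \<mu> H" unfolding D_def by simp
  hence "poly Q 0 = \<mu> * poly H 0" by simp
  moreover have "poly Q 0 = 0" unfolding Q_def H_def using p0 HH_0 by simp
  moreover have "poly H 0 = 1" unfolding H_def by (rule HH_0)
  ultimately have "\<mu> = 0" by simp
  hence pH: "p = H" using \<open>Q = smult \<mu> H\<close> unfolding Q_def by simp
  define c where "c = complex_of_real (cc n r1 r2 s s * (-1)^s)"
  define D2 where "D2 = H - smult c (rfp a s)"
  have cD2: "\<forall>i\<ge>s. coeff D2 i = 0"
  proof (intro allI impI)
    fix i assume "s \<le> i"
    show "coeff D2 i = 0"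
    proof (cases "i = s")
      case True
      have "((-1)::complex)^s * (-1)^s = 1" by (simp flip: power_mult_distrib)
      thus ?thesis using True unfolding D2_def c_def H_def
        by (simp add: coeff_HH_s coeff_rfp mult.assoc)
    next
      case False
      hence "i > s" using \<open>s \<le> i\<close> by simp
      thus ?thesis unfolding D2_def H_def using coeff_HH_gt[of s i n r1 r2]
        by (simp add: coeff_eq_0 degree_rfp)
    qed
  qed
  have "(\<Sum>x\<in>X. poly p (kk x) * cnj (poly p (kk x))) = (\<Sum>x\<in>X. poly H (kk x) * poly H (kk x))"
    unfolding pH kk_def H_def by (simp add: HH_real)
  also have "\<dots> = c * (\<Sum>x\<in>X. poly H (kk x) * poly (rfp a s) (kk x)) + (\<Sum>x\<in>X. poly H (kk x) * poly D2 (kk x))"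
    unfolding D2_def by (simp add: algebra_simps sum.distrib sum_subtractf sum_distrib_left)
  also have "(\<Sum>x\<in>X. poly H (kk x) * poly D2 (kk x)) = 0" by (rule orth_span[OF oH cD2])
  also have "(\<Sum>x\<in>X. poly H (kk x) * poly (rfp a s) (kk x)) = complex_of_real (\<Sum>j\<le>s. cc n r1 r2 s j * MM n r1 r2 j s)"
    using orth_HH[OF x1, of r2 s s] b unfolding X_def kk_def a_def H_def n_def by simp
  finally show ?thesis unfolding X_def kk_def c_def by simp
qed

lemma dim_core0:
  fixes A B C D Y :: real
  assumes "B \<noteq> 0" "C \<noteq> 0" "Y \<noteq> 0" "D \<noteq> 0"
  shows "A / (Y * B * C) - A / (B * (D * C)) = A * (D - Y) / (Y * B * (D * C))"
  using assms by (simp add: field_simps)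

lemma dim_core:
  fixes A B C X Y :: real
  assumes "B \<noteq> 0" "C \<noteq> 0" "Y \<noteq> 0" "X - Y + 1 \<noteq> 0"
  shows "A / (Y * B * C) - A / (B * ((X - Y + 1) * C)) = A * (X - 2 * Y + 1) / (Y * B * ((X - Y + 1) * C))"
proof -
  have "X - 2 * Y + 1 = (X - Y + 1) - Y" by simp
  thus ?thesis using dim_core0[OF assms] by simp
qed

lemma dim_formula:
  assumes "2 * s \<le> n"
  shows "real (n choose s) - (if s = 0 then 0 else real (n choose (s - 1)))
       = fact n * (real n - 2 * real s + 1) / (fact s * fact (n - s + 1))"
proof (cases s)
  case 0
  have "fact (n + 1) = (real n + 1) * (fact n :: real)" by (simp add: algebra_simps)
  thus ?thesis using 0 by simp
next
  case (Suc t)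
  have ns: "n - s + 1 = Suc (n - s)" using assms by simp
  have f1: "(fact (n - s + 1) :: real) = (real n - real s + 1) * fact (n - s)"
    unfolding ns fact_Suc using assms by (simp add: of_nat_diff)
  have f2: "(fact s :: real) = real s * fact t" using Suc by simp
  have c1: "real (n choose s) = fact n / (fact s * fact (n - s))"
    using assms by (intro binomial_fact) simp
  have c2: "real (n choose (s - 1)) = fact n / (fact t * fact (n - s + 1))"
  proof -
    have "real (n choose t) = fact n / (fact t * fact (n - t))" using assms Suc by (intro binomial_fact) simp
    moreover have "n - t = n - s + 1" using assms Suc by simp
    ultimately show ?thesis using Suc by simp
  qed
  have nz: "real n - real s + 1 \<noteq> 0" "real s \<noteq> 0" using assms Suc by auto
  have "s \<noteq> 0" using Suc by simp
  hence "real (n choose s) - (if s = 0 then 0 else real (n choose (s - 1)))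
       = real (n choose s) - real (n choose (s - 1))" by simp
  also have "\<dots> = fact n / (real s * fact t * fact (n - s)) - fact n / (fact t * ((real n - real s + 1) * fact (n - s)))"
    unfolding c1 c2 f1 f2 ..
  also have "\<dots> = fact n * (real n - 2 * real s + 1) / (real s * fact t * ((real n - real s + 1) * fact (n - s)))"
    by (rule dim_core) (use nz in auto)
  also have "\<dots> = fact n * (real n - 2 * real s + 1) / (fact s * fact (n - s + 1))"
    unfolding f1 f2 ..
  finally show ?thesis .
qed

lemma alg_core:
  fixes C1 F N R G Fn fr2 fnr2 M fs fn E :: real
  assumes "F \<noteq> 0" "N \<noteq> 0" "R \<noteq> 0" "fr2 \<noteq> 0" "fnr2 \<noteq> 0" "fs \<noteq> 0" "fn \<noteq> 0" "E \<noteq> 0" "Fn \<noteq> 0"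
  shows "C1 * (F / (N * R) * (G * (Fn / (fnr2 * fr2)) * (M * fs / (F * E))))
       = (G * M) / (N * R) * (C1 * (fn / (fr2 * fnr2))) / (fn * E / (fs * Fn))"
  using assms by (simp add: field_simps)

lemma final_alg:
  assumes b: "r1 \<le> n" "r2 \<le> n" "s \<le> r1" "s \<le> n - r1" "s \<le> r2" "s \<le> n - r2"
  shows "real (n choose r1) * (cc n r1 r2 s s * (-1)^s * (fact s * real (r1 choose s)
           * (fact (n-s+1) / (fact (n-r2) * fact r2))
           * (ffall (real (n - r2)) s * fact s / (\<Prod>i\<le>s. real (n-s+1) - real i))))
    = (ffall (real r1) s * ffall (real (n - r2)) s) / (ffall (real (n - r1)) s * ffall (real r2) s)
       * (real (n choose r1) * real (n choose r2))
         / (real (n choose s) - (if s = 0 then 0 else real (n choose (s - 1))))"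
proof -
  have s2: "2 * s \<le> n" using b by simp
  define F where "F = ffall (real (n-s+1)) s"
  define N where "N = ffall (real (n - r1)) s"
  define R where "R = ffall (real r2) s"
  define E where "E = real n - 2 * real s + 1"
  have Fp: "F > 0" unfolding F_def using s2 by (intro ffall_pos) simp
  have Np: "N > 0" unfolding N_def using b by (intro ffall_pos) simp
  have Rp: "R > 0" unfolding R_def using b by (intro ffall_pos) simp
  have a: "cc n r1 r2 s s * (-1)^s = F / (N * R)"
  proof -
    have "((-1)::real)^s * (-1)^s = 1" by (simp flip: power_mult_distrib)
    thus ?thesis unfolding cc_def F_def N_def R_def by simp
  qed
  have bb: "fact s * real (r1 choose s) = ffall (real r1) s"
  proof -
    have "ffall (real r1) s = fact r1 / fact (r1 - s)" using b by (intro ffall_nat) simp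
    moreover have "fact s * real (r1 choose s) = fact r1 / fact (r1 - s)" using b by (intro fact_binomial) simp
    ultimately show ?thesis by simp
  qed
  have c: "(\<Prod>i\<le>s. real (n-s+1) - real i) = F * E"
  proof -
    have "(\<Prod>i\<le>s. real (n-s+1) - real i) = (\<Prod>i<Suc s. real (n-s+1) - real i)"
      by (simp add: lessThan_Suc_atMost)
    also have "\<dots> = F * (real (n-s+1) - real s)" unfolding F_def ffall_def by simp
    finally show ?thesis using s2 unfolding E_def by (simp add: of_nat_diff)
  qed
  have d: "real (n choose r2) = fact n / (fact r2 * fact (n - r2))" using b by (intro binomial_fact)
  have e: "E > 0" using s2 unfolding E_def by simp
  have "real (n choose r1) * (cc n r1 r2 s s * (-1)^s * (fact s * real (r1 choose s)
           * (fact (n-s+1) / (fact (n-r2) * fact r2))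
           * (ffall (real (n - r2)) s * fact s / (\<Prod>i\<le>s. real (n-s+1) - real i))))
      = real (n choose r1) * (F / (N * R) * (ffall (real r1) s * (fact (n-s+1) / (fact (n-r2) * fact r2))
           * (ffall (real (n - r2)) s * fact s / (F * E))))"
    unfolding a[symmetric] bb[symmetric] c by (simp add: mult.assoc)
  also have "\<dots> = (ffall (real r1) s * ffall (real (n - r2)) s) / (N * R)
       * (real (n choose r1) * (fact n / (fact r2 * fact (n - r2))))
         / (fact n * E / (fact s * fact (n - s + 1)))"
    by (rule alg_core) (use Fp Np Rp e in auto)
  also have "\<dots> = (ffall (real r1) s * ffall (real (n - r2)) s) / (ffall (real (n - r1)) s * ffall (real r2) s)
       * (real (n choose r1) * real (n choose r2))
         / (real (n choose s) - (if s = 0 then 0 else real (n choose (s - 1))))"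
    unfolding dim_formula[OF s2] d E_def N_def R_def ..
  finally show ?thesis .
qed

theorem corollary1:
  fixes L :: "('a::finite set \<Rightarrow> complex) \<Rightarrow> ('a set \<Rightarrow> complex)"
    and r1 r2 s :: nat
  defines "n \<equiv> card (UNIV :: 'a set)"
  assumes "r1 \<le> n" and "r2 \<le> n"
    and "s \<le> min (min r1 (n - r1)) (min r2 (n - r2))"
    and "is_Lambda r1 r2 s L"
  shows "op_trace (L \<circ> hadjoint L) =
    complex_of_real
      ((ffall (real r1) s * ffall (real (n - r2)) s) / (ffall (real (n - r1)) s * ffall (real r2) s)
       * (real (n choose r1) * real (n choose r2))
         / (real (n choose s) - (if s = 0 then 0 else real (n choose (s - 1)))))"
proof -
  have b: "r1 \<le> n" "r2 \<le> n" "s \<le> r1" "s \<le> n - r1" "s \<le> r2" "s \<le> n - r2"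
    using assms(2,3,4) by auto
  have comp: "\<forall>\<psi>. L \<psi> \<in> L2_comp r2 s" using assms(5) unfolding is_Lambda_def by blast
  obtain p :: "complex poly" where deg: "degree p = s" and p0: "poly p 0 = 1"
    and kern: "\<forall>\<psi> x2. L \<psi> x2 = (if card x2 = r2
            then (\<Sum>x1\<in>{x1. card x1 = r1}. poly p (of_nat (card (x2 - x1))) * \<psi> x1) else 0)"
    using assms(5) unfolding is_Lambda_def by blast
  define X1 where "X1 = {x::'a set. card x = r1}"
  define X2 where "X2 = {x::'a set. card x = r2}"
  define g where "g = (\<lambda>x1 x2::'a set. poly p (of_nat (card (x2 - x1))) * cnj (poly p (of_nat (card (x2 - x1)))))"
  define W where "W = cc n r1 r2 s s * (-1)^s * (\<Sum>j\<le>s. cc n r1 r2 s j * MM n r1 r2 j s)"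
  have adj: "hadjoint L (delta x) = (\<lambda>x'. cnj (L (delta x') x))" for x
  proof
    fix x'
    have "(\<Sum>y\<in>UNIV. cnj (L (delta x') y) * delta x y) = (\<Sum>y\<in>UNIV. if y = x then cnj (L (delta x') y) else 0)"
      unfolding delta_def by (rule sum.cong) auto
    also have "\<dots> = cnj (L (delta x') x)" by simp
    finally show "hadjoint L (delta x) x' = cnj (L (delta x') x)" unfolding hadjoint_def .
  qed
  have tr: "(L \<circ> hadjoint L) (delta x) x = (if card x = r2 then (\<Sum>x1\<in>X1. g x1 x) else 0)" for x
  proof -
    have "(L \<circ> hadjoint L) (delta x) x = L (\<lambda>x'. cnj (L (delta x') x)) x" by (simp add: adj)
    also have "\<dots> = (if card x = r2 then (\<Sum>x1\<in>X1. g x1 x) else 0)"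
    proof (cases "card x = r2")
      case True
      have "L (\<lambda>x'. cnj (L (delta x') x)) x
          = (\<Sum>x1\<in>X1. poly p (of_nat (card (x - x1))) * cnj (L (delta x1) x))"
        using kern True unfolding X1_def by simp
      also have "\<dots> = (\<Sum>x1\<in>X1. g x1 x)"
      proof (rule sum.cong)
        fix x1 assume "x1 \<in> X1"
        thus "poly p (of_nat (card (x - x1))) * cnj (L (delta x1) x) = g x1 x"
          using L_delta[OF kern, of x1 x] True unfolding X1_def g_def by simp
      qed simp
      finally show ?thesis using True by simp
    next
      case False thus ?thesis using kern by simp
    qed
    finally show ?thesis .
  qed
  have "op_trace (L \<circ> hadjoint L) = (\<Sum>x\<in>UNIV. if card x = r2 then (\<Sum>x1\<in>X1. g x1 x) else 0)"
    unfolding op_trace_def tr ..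
  also have "\<dots> = (\<Sum>x2\<in>X2. \<Sum>x1\<in>X1. g x1 x2)"
    unfolding X2_def using sum.inter_filter[of UNIV "\<lambda>x. \<Sum>x1\<in>X1. g x1 x" "\<lambda>x. card x = r2"] by simp
  also have "\<dots> = (\<Sum>x1\<in>X1. \<Sum>x2\<in>X2. g x1 x2)" by (rule sum.swap)
  also have "\<dots> = (\<Sum>x1\<in>X1. complex_of_real W)"
  proof (rule sum.cong)
    fix x1 assume "x1 \<in> X1"
    hence "card x1 = r1" unfolding X1_def by simp
    from row_norm[OF kern comp deg p0 this b[unfolded n_def]]
    show "(\<Sum>x2\<in>X2. g x1 x2) = complex_of_real W"
      unfolding X2_def g_def W_def n_def .
  qed simp
  also have "\<dots> = complex_of_real (real (n choose r1) * W)"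
  proof -
    have "card X1 = n choose r1"
      unfolding X1_def n_def using n_subsets[of "UNIV :: 'a set" r1] by simp
    thus ?thesis by simp
  qed
  also have "real (n choose r1) * W = (ffall (real r1) s * ffall (real (n - r2)) s) / (ffall (real (n - r1)) s * ffall (real r2) s)
       * (real (n choose r1) * real (n choose r2))
         / (real (n choose s) - (if s = 0 then 0 else real (n choose (s - 1))))"
    unfolding W_def R2[OF b] by (rule final_alg[OF b])
  finally show ?thesis .
qed

end
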